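(* Let $(H,\alpha_H)$ be an object of $\overline{\mathcal H}^{i,j}(Vec_\Bbbk)$ and let $\Delta_H:H\to H\otimes H$ (written $h\mapsto h_1\otimes h_2$) and $\varepsilon_H:H\to\Bbbk$ be morphisms in $\overline{\mathcal H}^{i,j}(Vec_\Bbbk)$. Consider the functor $\ddot H=-\otimes H$ on $\overline{\mathcal H}^{i,j}(Vec_\Bbbk)$, $(X,\alpha_X)\mapsto(X\otimes H,\alpha_X\otimes\alpha_H)$, with natural transformations $\delta_X:X\otimes H\to(X\otimes H)\otimes H$, $x\otimes h\mapsto(\alpha_X(x)\otimes h_1)\otimes\alpha_H^{-1}(h_2)$, and $\epsilon_X:X\otimes H\to X$, $x\otimes h\mapsto\varepsilon_H(h)\alpha_X^{-1}(x)$. Then $(\ddot H,\delta,\epsilon)$ is a comonad on $\overline{\mathcal H}^{i,j}(Vec_\Bbbk)$ if and only if $(H,\alpha_H,\Delta_H,\varepsilon_H)$ is a Hom-coalgebra. Moreover, the category of right $H$-Hom-comodules coincides with the category of $\ddot H$-comodules in $\overline{\mathcal H}^{i,j}(Vec_\Bbbk)$.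
   Context: $\Bbbk$ is a field of characteristic $0$; all vector spaces are finite-dimensional; $i,j$ are fixed integers. $\overline{\mathcal H}^{i,j}(Vec_\Bbbk)$ is the monoidal category whose objects are pairs $(X,\alpha_X)$ with $X$ a finite-dimensional $\Bbbk$-space and $\alpha_X$ a linear automorphism of $X$; morphisms $f:(X,\alpha_X)\to(Y,\alpha_Y)$ are linear maps with $\alpha_Y\circ f=f\circ\alpha_X$; $(X,\alpha_X)\otimes(Y,\alpha_Y)=(X\otimes Y,\alpha_X\otimes\alpha_Y)$, unit $(\Bbbk,\mathrm{id})$; associativity $a_{X,Y,Z}((x\otimes y)\otimes z)=\alpha_X^{i+1}(x)\otimes(y\otimes\alpha_Z^{-j-1}(z))$; unit constraints $l_X(\lambda\otimes x)=\lambda\alpha_X^{j+1}(x)$, $r_X(x\otimes\lambda)=\lambda\alpha_X^{i+1}(x)$. A Hom-coalgebra $(C,\alpha,\Delta,\varepsilon)$: $\varepsilon\circ\alpha=\varepsilon$, $\alpha(c_1)\otimes\Delta(c_2)=\Delta(c_1)\otimes\alpha(c_2)$, $\varepsilon(c_1)c_2=c_1\varepsilon(c_2)=\alpha(c)$. A right $H$-Hom-comodule is $(M,\alpha_M,\rho^M)$, $(M,\alpha_M)$ an object of $\overline{\mathcal H}^{i,j}(Vec_\Bbbk)$, $\rho^M:M\to M\otimes H$, $m\mapsto m_0\otimes m_1$, a morphism there, with $\alpha_M(m_0)\otimes\Delta(m_1)=\rho^M(m_0)\otimes\alpha_H(m_1)$ and $\varepsilon(m_1)m_0=\alpha_M(m)$;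 morphisms are colinear maps commuting with the $\alpha$'s. A comonad on a category: endofunctor $F$, natural $\Delta:F\to FF$, $\varepsilon:F\to\mathrm{id}$ with $F\Delta\circ\Delta=\Delta F\circ\Delta$, $F\varepsilon\circ\Delta=\varepsilon F\circ\Delta=\mathrm{id}$; a comodule is $(X,\rho)$, $\rho:X\to FX$, $F\rho\circ\rho=\Delta_X\circ\rho$, $\varepsilon_X\circ\rho=\mathrm{id}_X$. *)

theory Defs
  imports "Jordan_Normal_Form.Matrix"
begin

(* Model of the category \<H>-bar^{i,j}(Vec_k) (a skeleton of it):
   an object (X, alpha_X) is represented by the matrix of alpha_X with respect to
   a chosen basis of X, i.e. an invertible square matrix; dim X = dim_row.  Tensor products of spaces/maps are Kronecker
   products w.r.t. the product basis ordered lexicographically, so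
   (X (x) Y) (x) Z and X (x) (Y (x) Z) have literally the same coordinates. *)

definition kron :: "'a::semiring_1 mat \<Rightarrow> 'a mat \<Rightarrow> 'a mat" where
  "kron A B = mat (dim_row A * dim_row B) (dim_col A * dim_col B)
     (\<lambda>(i, j). A $$ (i div dim_row B, j div dim_col B) * B $$ (i mod dim_row B, j mod dim_col B))"

definition inv_of :: "'a::field mat \<Rightarrow> 'a mat" where
  "inv_of A = (SOME B. B \<in> carrier_mat (dim_row A) (dim_row A) \<and>
       A * B = 1\<^sub>m (dim_row A) \<and> B * A = 1\<^sub>m (dim_row A))"

definition hobj :: "'a::field mat \<Rightarrow> bool" where
  "hobj A \<longleftrightarrow> A \<in> carrier_mat (dim_row A) (dim_row A) \<and> invertible_mat A"

definition hhom :: "'a::field mat \<Rightarrow> 'a mat \<Rightarrow> 'a mat \<Rightarrow> bool" where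
  "hhom A B f \<longleftrightarrow> f \<in> carrier_mat (dim_row B) (dim_row A) \<and> B * f = f * A"

definition is_comonad ::
  "('a::field mat \<Rightarrow> 'a mat) \<Rightarrow> ('a mat \<Rightarrow> 'a mat \<Rightarrow> 'a mat \<Rightarrow> 'a mat)
   \<Rightarrow> ('a mat \<Rightarrow> 'a mat) \<Rightarrow> ('a mat \<Rightarrow> 'a mat) \<Rightarrow> bool" where
  "is_comonad Fo Fm D E \<longleftrightarrow>
     (\<forall>X. hobj X \<longrightarrow> hobj (Fo X)) \<and>
     (\<forall>X Y f. hobj X \<and> hobj Y \<and> hhom X Y f \<longrightarrow> hhom (Fo X) (Fo Y) (Fm X Y f)) \<and>
     (\<forall>X. hobj X \<longrightarrow> Fm X X (1\<^sub>m (dim_row X)) = 1\<^sub>m (dim_row (Fo X))) \<and>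
     (\<forall>X Y Z f g. hobj X \<and> hobj Y \<and> hobj Z \<and> hhom X Y f \<and> hhom Y Z g \<longrightarrow>
         Fm X Z (g * f) = Fm Y Z g * Fm X Y f) \<and>
     (\<forall>X. hobj X \<longrightarrow> hhom (Fo X) (Fo (Fo X)) (D X) \<and> hhom (Fo X) X (E X)) \<and>
     (\<forall>X Y f. hobj X \<and> hobj Y \<and> hhom X Y f \<longrightarrow>
         D Y * Fm X Y f = Fm (Fo X) (Fo Y) (Fm X Y f) * D X \<and>
         E Y * Fm X Y f = f * E X) \<and>
     (\<forall>X. hobj X \<longrightarrow>
         Fm (Fo X) (Fo (Fo X)) (D X) * D X = D (Fo X) * D X \<and>
         Fm (Fo X) X (E X) * D X = 1\<^sub>m (dim_row (Fo X)) \<and>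
         E (Fo X) * D X = 1\<^sub>m (dim_row (Fo X)))"

definition comonad_comodule ::
  "('a::field mat \<Rightarrow> 'a mat) \<Rightarrow> ('a mat \<Rightarrow> 'a mat \<Rightarrow> 'a mat \<Rightarrow> 'a mat)
   \<Rightarrow> ('a mat \<Rightarrow> 'a mat) \<Rightarrow> ('a mat \<Rightarrow> 'a mat) \<Rightarrow> 'a mat \<Rightarrow> 'a mat \<Rightarrow> bool" where
  "comonad_comodule Fo Fm D E X \<rho> \<longleftrightarrow> hobj X \<and> hhom X (Fo X) \<rho> \<and>
     Fm X (Fo X) \<rho> * \<rho> = D X * \<rho> \<and> E X * \<rho> = 1\<^sub>m (dim_row X)"

definition comonad_comodule_hom ::
  "('a::field mat \<Rightarrow> 'a mat) \<Rightarrow> ('a mat \<Rightarrow> 'a mat \<Rightarrow> 'a mat \<Rightarrow> 'a mat)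
   \<Rightarrow> 'a mat \<Rightarrow> 'a mat \<Rightarrow> 'a mat \<Rightarrow> 'a mat \<Rightarrow> 'a mat \<Rightarrow> bool" where
  "comonad_comodule_hom Fo Fm X \<rho> Y \<sigma> f \<longleftrightarrow> hhom X Y f \<and> \<sigma> * f = Fm X Y f * \<rho>"

(* Hom-coalgebra (H, alpha, Delta, eps); Delta : d*d x d matrix, eps : 1 x d matrix *)
definition hom_coalgebra :: "'a::field mat \<Rightarrow> 'a mat \<Rightarrow> 'a mat \<Rightarrow> bool" where
  "hom_coalgebra \<alpha> \<Delta> \<epsilon> \<longleftrightarrow>
     \<epsilon> * \<alpha> = \<epsilon> \<and>
     kron \<alpha> \<Delta> * \<Delta> = kron \<Delta> \<alpha> * \<Delta> \<and>
     kron \<epsilon> (1\<^sub>m (dim_row \<alpha>)) * \<Delta> = \<alpha> \<and>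
     kron (1\<^sub>m (dim_row \<alpha>)) \<epsilon> * \<Delta> = \<alpha>"

definition hom_comodule :: "'a::field mat \<Rightarrow> 'a mat \<Rightarrow> 'a mat \<Rightarrow> 'a mat \<Rightarrow> 'a mat \<Rightarrow> bool" where
  "hom_comodule \<alpha>H \<Delta> \<epsilon> \<alpha>M \<rho> \<longleftrightarrow> hobj \<alpha>M \<and> hhom \<alpha>M (kron \<alpha>M \<alpha>H) \<rho> \<and>
     kron \<alpha>M \<Delta> * \<rho> = kron \<rho> \<alpha>H * \<rho> \<and>
     kron (1\<^sub>m (dim_row \<alpha>M)) \<epsilon> * \<rho> = \<alpha>M"

definition hom_comodule_hom :: "'a::field mat \<Rightarrow> 'a mat \<Rightarrow> 'a mat \<Rightarrow> 'a mat \<Rightarrow> 'a mat \<Rightarrow> 'a mat \<Rightarrow> bool" where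
  "hom_comodule_hom \<alpha>H \<alpha>M \<rho> \<alpha>N \<sigma> f \<longleftrightarrow> hhom \<alpha>M \<alpha>N f \<and> \<sigma> * f = kron f (1\<^sub>m (dim_row \<alpha>H)) * \<rho>"

definition Hdd_obj :: "'a::field mat \<Rightarrow> 'a mat \<Rightarrow> 'a mat" where
  "Hdd_obj \<alpha>H X = kron X \<alpha>H"

definition Hdd_mor :: "'a::field mat \<Rightarrow> 'a mat \<Rightarrow> 'a mat \<Rightarrow> 'a mat \<Rightarrow> 'a mat" where
  "Hdd_mor \<alpha>H X Y f = kron f (1\<^sub>m (dim_row \<alpha>H))"

(* delta_X (x (x) h) = (alpha_X x (x) h1) (x) alpha_H^{-1} h2 *)
definition Hdd_delta :: "'a::field mat \<Rightarrow> 'a mat \<Rightarrow> 'a mat \<Rightarrow> 'a mat" where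
  "Hdd_delta \<alpha>H \<Delta> X = kron X (kron (1\<^sub>m (dim_row \<alpha>H)) (inv_of \<alpha>H) * \<Delta>)"

(* eps_X (x (x) h) = eps_H(h) alpha_X^{-1} x *)
definition Hdd_eps :: "'a::field mat \<Rightarrow> 'a mat \<Rightarrow> 'a mat \<Rightarrow> 'a mat" where
  "Hdd_eps \<alpha>H \<epsilon> X = kron (inv_of X) \<epsilon>"

end

theory Submission
  imports Defs
begin

lemma sum_split_mult: "(\<Sum>k<n*q. f k) = (\<Sum>a<n. \<Sum>b<q. f (a*q+b::nat) :: 'b::comm_monoid_add)"
proof (induction n)
  case 0 then show ?case by simp
next
  case (Suc n)
  have "(\<Sum>k<Suc n*q. f k) = (\<Sum>k<n*q. f k) + (\<Sum>k\<in>{n*q..<n*q+q}. f k)"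
    by (simp add: add.commute sum.atLeastLessThan_concat lessThan_atLeast0 sum.union_disjoint[symmetric] ivl_disj_un)
  also have "(\<Sum>k\<in>{n*q..<n*q+q}. f k) = (\<Sum>b<q. f (n*q+b))"
  proof -
    have "(\<Sum>k\<in>{0+n*q..<q+n*q}. f k) = (\<Sum>b\<in>{0..<q}. f (b+n*q))" by (rule sum.shift_bounds_nat_ivl)
    then show ?thesis by (simp add: lessThan_atLeast0 add.commute)
  qed
  finally show ?case using Suc by simp
qed

lemma mult_mat_entry: "i < dim_row A \<Longrightarrow> j < dim_col B \<Longrightarrow> dim_col A = dim_row B \<Longrightarrow>
  (A * B) $$ (i,j) = (\<Sum>k<dim_col A. A $$ (i,k) * B $$ (k,j))"
  by (simp add: scalar_prod_def lessThan_atLeast0)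

lemma kron_dims[simp]: "dim_row (kron A B) = dim_row A * dim_row B" "dim_col (kron A B) = dim_col A * dim_col B"
  by (auto simp: kron_def)

lemma kron_carrier: "A \<in> carrier_mat m n \<Longrightarrow> B \<in> carrier_mat p q \<Longrightarrow> kron A B \<in> carrier_mat (m*p) (n*q)"
  by auto

lemma kron_index: "i < dim_row A * dim_row B \<Longrightarrow> j < dim_col A * dim_col B \<Longrightarrow>
   kron A B $$ (i,j) = A $$ (i div dim_row B, j div dim_col B) * B $$ (i mod dim_row B, j mod dim_col B)"
  by (simp add: kron_def)

lemma kron_mult:
  fixes A :: "'a::comm_semiring_1 mat"
  assumes A: "A \<in> carrier_mat m n" and B: "B \<in> carrier_mat p q" and C: "C \<in> carrier_mat n r" and D: "D \<in> carrier_mat q s"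
  shows "kron A B * kron C D = kron (A * C) (B * D)"
proof (rule eq_matI)
  fix i j assume i: "i < dim_row (kron (A * C) (B * D))" and j: "j < dim_col (kron (A * C) (B * D))"
  have ip: "i < m*p" and js: "j < r*s" using i j A B C D by auto
  have p0: "p > 0" using ip by (cases p) auto
  have s0: "s > 0" using js by (cases s) auto
  have i1: "i div p < m" using ip by (simp add: less_mult_imp_div_less)
  have i2: "i mod p < p" using p0 by simp
  have j1: "j div s < r" using js by (simp add: less_mult_imp_div_less)
  have j2: "j mod s < s" using s0 by simp
  have "(kron A B * kron C D) $$ (i,j) = (\<Sum>k<n*q. kron A B $$ (i,k) * kron C D $$ (k,j))"
    using A B C D ip js by (subst mult_mat_entry) auto
  also have "\<dots> = (\<Sum>a<n. \<Sum>b<q. kron A B $$ (i,a*q+b) * kron C D $$ (a*q+b,j))"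
    by (rule sum_split_mult)
  also have "\<dots> = (\<Sum>a<n. \<Sum>b<q. (A $$ (i div p, a) * C $$ (a, j div s)) * (B $$ (i mod p, b) * D $$ (b, j mod s)))"
  proof (intro sum.cong refl)
    fix a b assume a: "a \<in> {..<n}" and b: "b \<in> {..<q}"
    have ab1: "a*q+b < (a+1)*q" using b by simp
    have ab2: "(a+1)*q \<le> n*q" using a by (intro mult_le_mono1) simp
    have ab: "a*q+b < n*q" using ab1 ab2 by linarith
    have d: "(a*q+b) div q = a" "(a*q+b) mod q = b" using b by auto
    show "kron A B $$ (i,a*q+b) * kron C D $$ (a*q+b,j) = (A $$ (i div p, a) * C $$ (a, j div s)) * (B $$ (i mod p, b) * D $$ (b, j mod s))"
      using A B C D ip js ab b by (simp add: kron_index d mult_ac)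
  qed
  also have "\<dots> = (\<Sum>a<n. A $$ (i div p, a) * C $$ (a, j div s)) * (\<Sum>b<q. B $$ (i mod p, b) * D $$ (b, j mod s))"
    by (simp add: sum_product)
  also have "\<dots> = kron (A * C) (B * D) $$ (i,j)"
    using A B C D ip js i1 i2 j1 j2 by (simp add: kron_index scalar_prod_def lessThan_atLeast0)
  finally show "(kron A B * kron C D) $$ (i,j) = kron (A * C) (B * D) $$ (i,j)" .
qed (use A B C D in auto)

lemma mod_mult_div_aux: "(i::nat) mod (b*c) div c = i div c mod b"
proof (cases "c = 0")
  case False
  have "i mod (b*c) = c * (i div c mod b) + i mod c" using mod_mult2_eq[of i c b] by (simp add: mult.commute)
  then show ?thesis using False by simp
qed simp

lemma mod_mult_mod_aux: "(i::nat) mod (b*c) mod c = i mod c"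
  by (simp add: mod_mod_cancel)

lemma kron_assoc: "kron (kron A B) C = kron A (kron B C)"
proof (rule eq_matI)
  fix i j assume i: "i < dim_row (kron A (kron B C))" and j: "j < dim_col (kron A (kron B C))"
  let ?a = "dim_row A" and ?b = "dim_row B" and ?c = "dim_row C"
  let ?x = "dim_col A" and ?y = "dim_col B" and ?z = "dim_col C"
  have i': "i < ?a*?b*?c" and j': "j < ?x*?y*?z" using i j by (auto simp: mult.assoc)
  have c0: "?c > 0" using i' by (cases ?c) auto
  have b0: "?b > 0" using i' by (cases ?b) auto
  have z0: "?z > 0" using j' by (cases ?z) auto
  have y0: "?y > 0" using j' by (cases ?y) auto
  have i1: "i div ?c < ?a*?b" using i' by (simp add: less_mult_imp_div_less)
  have j1: "j div ?z < ?x*?y" using j' by (simp add: less_mult_imp_div_less)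
  have i2: "i mod (?b*?c) < ?b*?c" using b0 c0 by simp
  have j2: "j mod (?y*?z) < ?y*?z" using y0 z0 by simp
  have dd: "i div (?b*?c) = i div ?c div ?b" "j div (?y*?z) = j div ?z div ?y"
    by (metis div_mult2_eq mult.commute)+
  show "kron (kron A B) C $$ (i, j) = kron A (kron B C) $$ (i, j)"
    using i' j' i1 j1 i2 j2
    by (simp add: kron_index mult.assoc dd mod_mult_div_aux mod_mult_mod_aux)
qed (auto simp: mult.assoc)

lemma kron_one_one: "kron (1\<^sub>m m) (1\<^sub>m n) = (1\<^sub>m (m*n) :: 'a::semiring_1 mat)"
proof (rule eq_matI)
  fix i j assume i: "i < dim_row (1\<^sub>m (m*n) :: 'a mat)" and j: "j < dim_col (1\<^sub>m (m*n) :: 'a mat)"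
  then have i': "i < m*n" and j': "j < m*n" by auto
  have n0: "n > 0" using i' by (cases n) auto
  have "i div n < m" "j div n < m" using i' j' by (auto simp: less_mult_imp_div_less)
  moreover have "(i div n = j div n \<and> i mod n = j mod n) = (i = j)"
    by (metis div_mult_mod_eq)
  ultimately show "kron (1\<^sub>m m) (1\<^sub>m n) $$ (i, j) = (1\<^sub>m (m*n) :: 'a mat) $$ (i, j)"
    using i' j' n0 by (auto simp: kron_index)
qed auto

lemma kron_one1_left[simp]: "kron (1\<^sub>m 1) A = A"
  by (rule eq_matI) (auto simp: kron_index)

lemma kron_one1_right[simp]: "kron A (1\<^sub>m 1) = A"
  by (rule eq_matI) (auto simp: kron_index)

lemma kron_one1_Suc[simp]: "kron (1\<^sub>m (Suc 0)) A = A" "kron A (1\<^sub>m (Suc 0)) = A"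
  using kron_one1_left[of A] kron_one1_right[of A] by simp_all

lemma mult_assoc': "dim_col A = dim_row B \<Longrightarrow> dim_col B = dim_row C \<Longrightarrow> A * B * C = A * (B * C :: 'a::semiring_1 mat)"
  by (rule assoc_mult_mat[of A "dim_row A" "dim_col A" B "dim_col B" C "dim_col C"]) auto

lemma kron_mult': "dim_col A = dim_row C \<Longrightarrow> dim_col B = dim_row D \<Longrightarrow>
   kron A B * kron C D = kron (A * C) (B * (D :: 'a::comm_semiring_1 mat))"
  by (rule kron_mult[of A _ "dim_col A" B _ "dim_col B" C "dim_col C" D "dim_col D"]) auto

lemma hobj_inv:
  fixes A :: "'a::field mat"
  assumes "hobj A"
  shows "inv_of A \<in> carrier_mat (dim_row A) (dim_row A) \<and> A * inv_of A = 1\<^sub>m (dim_row A) \<and> inv_of A * A = 1\<^sub>m (dim_row A)"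
proof -
  from assms obtain B where sq: "dim_col A = dim_row A" and AB: "A * B = 1\<^sub>m (dim_row A)" and BA: "B * A = 1\<^sub>m (dim_row B)"
    unfolding hobj_def invertible_mat_def inverts_mat_def by auto
  have "dim_col (A * B) = dim_row A" using AB by simp
  then have "dim_col B = dim_row A" by simp
  moreover have "dim_col (B * A) = dim_row B" using BA by simp
  then have "dim_row B = dim_row A" using sq by simp
  ultimately have "\<exists>B. B \<in> carrier_mat (dim_row A) (dim_row A) \<and> A * B = 1\<^sub>m (dim_row A) \<and> B * A = 1\<^sub>m (dim_row A)"
    using AB BA by (intro exI[of _ B]) auto
  then show ?thesis unfolding inv_of_def by (rule someI_ex)
qed

lemma inv_of_unique:
  fixes A :: "'a::field mat"
  assumes "hobj A" "B \<in> carrier_mat (dim_row A) (dim_row A)" "A * B = 1\<^sub>m (dim_row A)"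
  shows "inv_of A = B"
proof -
  have i: "inv_of A \<in> carrier_mat (dim_row A) (dim_row A)" "inv_of A * A = 1\<^sub>m (dim_row A)"
    using hobj_inv[OF assms(1)] by blast+
  have Ac: "A \<in> carrier_mat (dim_row A) (dim_row A)" using assms(1) by (simp add: hobj_def)
  have "inv_of A = inv_of A * 1\<^sub>m (dim_row A)" using i(1) by (rule right_mult_one_mat[symmetric])
  also have "\<dots> = inv_of A * (A * B)" by (simp only: assms(3))
  also have "\<dots> = (inv_of A * A) * B" using i Ac assms by (intro assoc_mult_mat[symmetric]) blast+
  also have "\<dots> = B" unfolding i(2) using assms(2) by (rule left_mult_one_mat)
  finally show ?thesis .
qed

lemma hobj_intro:
  fixes A :: "'a::field mat"
  assumes "A \<in> carrier_mat n n" "B \<in> carrier_mat n n" "A * B = 1\<^sub>m n" "B * A = 1\<^sub>m n"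
  shows "hobj A"
  using assms unfolding hobj_def invertible_mat_def inverts_mat_def by auto

lemma hobj_dims:
  fixes A :: "'a::field mat"
  assumes "hobj A"
  shows "dim_col A = dim_row A" "dim_row (inv_of A) = dim_row A" "dim_col (inv_of A) = dim_row A"
    "A * inv_of A = 1\<^sub>m (dim_row A)" "inv_of A * A = 1\<^sub>m (dim_row A)"
  using hobj_inv[OF assms] assms unfolding hobj_def carrier_mat_def by auto

lemma hobj_kron:
  fixes A B :: "'a::field mat"
  assumes A: "hobj A" and B: "hobj B"
  shows "hobj (kron A B)" "inv_of (kron A B) = kron (inv_of A) (inv_of B)"
proof -
  note a = hobj_dims[OF A] and b = hobj_dims[OF B]
  have 1: "kron A B * kron (inv_of A) (inv_of B) = 1\<^sub>m (dim_row A * dim_row B)"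
    by (subst kron_mult') (simp_all only: a b kron_one_one)
  have 2: "kron (inv_of A) (inv_of B) * kron A B = 1\<^sub>m (dim_row A * dim_row B)"
    by (subst kron_mult') (simp_all only: a b kron_one_one)
  have c1: "kron A B \<in> carrier_mat (dim_row A * dim_row B) (dim_row A * dim_row B)"
    by (rule carrier_matI) (simp_all only: kron_dims a b)
  have c2: "kron (inv_of A) (inv_of B) \<in> carrier_mat (dim_row A * dim_row B) (dim_row A * dim_row B)"
    by (rule carrier_matI) (simp_all only: kron_dims a b)
  show h: "hobj (kron A B)"
    by (rule hobj_intro[OF c1 c2 1 2])
  show "inv_of (kron A B) = kron (inv_of A) (inv_of B)"
    by (rule inv_of_unique[OF h]) (simp_all only: c2 1 kron_dims)
qed

lemma hobj_one: "hobj (1\<^sub>m n :: 'a::field mat)" "inv_of (1\<^sub>m n :: 'a::field mat) = 1\<^sub>m n"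
proof -
  show h: "hobj (1\<^sub>m n :: 'a::field mat)" by (rule hobj_intro[of _ n "1\<^sub>m n"]) simp_all
  show "inv_of (1\<^sub>m n :: 'a::field mat) = 1\<^sub>m n" by (rule inv_of_unique[OF h]) simp_all
qed


declare assoc_mult_mat[simp del]

lemma cancel_left:
  fixes M Mi X Y :: "'a::field mat"
  assumes "Mi * M = 1\<^sub>m n" "dim_col Mi = dim_row M" "dim_col M = dim_row X" "dim_col M = dim_row Y"
    "dim_row X = n" "dim_row Y = n" "M * X = M * Y"
  shows "X = Y"
proof -
  have "X = (Mi * M) * X" using assms by simp
  also have "\<dots> = Mi * (M * X)" by (rule mult_assoc') (use assms in simp_all)
  also have "\<dots> = Mi * (M * Y)" using assms by simp
  also have "\<dots> = (Mi * M) * Y" by (rule mult_assoc'[symmetric]) (use assms in simp_all)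
  also have "\<dots> = Y" using assms by simp
  finally show ?thesis .
qed

lemma mult_kron_left1: "dim_row B = 1 \<Longrightarrow> dim_col A = dim_row C \<Longrightarrow> A * kron C B = kron (A*C) (B :: 'a::comm_semiring_1 mat)"
proof -
  assume b: "dim_row B = 1" and ac: "dim_col A = dim_row C"
  have "A * kron C B = kron A (1\<^sub>m 1) * kron C B" by simp
  also have "\<dots> = kron (A*C) (1\<^sub>m 1 * B)" by (rule kron_mult') (simp_all add: b ac)
  also have "\<dots> = kron (A*C) B" using b by simp
  finally show ?thesis .
qed

lemma inv_swap:
  fixes Q Qi A B :: "'a::field mat"
  assumes "Q * Qi = 1\<^sub>m n" "Qi * Q = 1\<^sub>m n" "dim_row Q = n" "dim_col Q = n" "dim_row Qi = n" "dim_col Qi = n"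
    "dim_row A = n" "dim_row B = n"
  shows "(A = Q * B) \<longleftrightarrow> (B = Qi * A)"
proof
  assume h: "A = Q * B"
  have "B = (Qi * Q) * B" using assms by simp
  also have "\<dots> = Qi * (Q * B)" by (rule mult_assoc') (use assms in simp_all)
  finally show "B = Qi * A" using h by simp
next
  assume h: "B = Qi * A"
  have "A = (Q * Qi) * A" using assms by simp
  also have "\<dots> = Q * (Qi * A)" by (rule mult_assoc') (use assms in simp_all)
  finally show "A = Q * B" using h by simp
qed

context
  fixes a ai \<Delta> \<epsilon> :: "'a::field mat" and d :: nat
  assumes da: "dim_row a = d" "dim_col a = d" and dai: "dim_row ai = d" "dim_col ai = d"
    and inv: "a * ai = 1\<^sub>m d" "ai * a = 1\<^sub>m d"
    and dD: "dim_row \<Delta> = d*d" "dim_col \<Delta> = d"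
    and hD: "kron a a * \<Delta> = \<Delta> * a"
    and de: "dim_row \<epsilon> = 1" "dim_col \<epsilon> = d" and he: "\<epsilon> * a = \<epsilon>"
begin

lemmas dims = da dai dD de

lemma eps_ai: "\<epsilon> * ai = \<epsilon>"
proof -
  have "\<epsilon> * ai = (\<epsilon> * a) * ai" by (simp add: he)
  also have "\<dots> = \<epsilon> * (a * ai)" by (rule mult_assoc') (simp_all add: dims)
  also have "\<dots> = \<epsilon>" by (simp add: inv dims)
  finally show ?thesis .
qed

lemma K1: "kron a a * (kron (1\<^sub>m d) ai * \<Delta>) = (kron (1\<^sub>m d) ai * \<Delta>) * a"
proof -
  have "kron a a * (kron (1\<^sub>m d) ai * \<Delta>) = (kron a a * kron (1\<^sub>m d) ai) * \<Delta>"
    by (rule mult_assoc'[symmetric]) (simp_all add: dims)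
  also have "\<dots> = kron a (1\<^sub>m d) * \<Delta>" by (simp add: kron_mult' dims inv)
  finally have 1: "kron a a * (kron (1\<^sub>m d) ai * \<Delta>) = kron a (1\<^sub>m d) * \<Delta>" .
  have "(kron (1\<^sub>m d) ai * \<Delta>) * a = kron (1\<^sub>m d) ai * (\<Delta> * a)"
    by (rule mult_assoc') (simp_all add: dims)
  also have "\<dots> = kron (1\<^sub>m d) ai * (kron a a * \<Delta>)" by (simp add: hD)
  also have "\<dots> = (kron (1\<^sub>m d) ai * kron a a) * \<Delta>" by (rule mult_assoc'[symmetric]) (simp_all add: dims)
  also have "\<dots> = kron a (1\<^sub>m d) * \<Delta>" by (simp add: kron_mult' dims inv)
  finally show ?thesis using 1 by simp
qed

lemma F1: "\<Delta> * ai = kron ai ai * \<Delta>"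
proof -
  have "kron ai ai * \<Delta> = kron ai ai * \<Delta> * (a * ai)" by (simp add: inv dims)
  also have "\<dots> = kron ai ai * (\<Delta> * a) * ai"
    by (simp add: mult_assoc' dims)
  also have "\<dots> = kron ai ai * (kron a a * \<Delta>) * ai" by (simp add: hD)
  also have "\<dots> = (kron ai ai * kron a a) * \<Delta> * ai" by (simp add: mult_assoc' dims)
  also have "\<dots> = \<Delta> * ai" by (simp add: kron_mult' dims inv kron_one_one)
  finally show ?thesis by simp
qed


lemma M_inv: "kron (1\<^sub>m d) (kron a (a*a)) * kron (1\<^sub>m d) (kron ai (ai*ai)) = 1\<^sub>m (d*(d*d))"
proof -
  have aa: "(a*a)*(ai*ai) = 1\<^sub>m d"
  proof -
    have "(a*a)*(ai*ai) = a*((a*ai)*ai)" by (simp add: mult_assoc' dims)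
    then show ?thesis by (simp add: inv dims)
  qed
  show ?thesis by (simp add: kron_mult' dims inv aa kron_one_one)
qed

lemma M_inv': "kron (1\<^sub>m d) (kron ai (ai*ai)) * kron (1\<^sub>m d) (kron a (a*a)) = 1\<^sub>m (d*(d*d))"
proof -
  have aa: "(ai*ai)*(a*a) = 1\<^sub>m d"
  proof -
    have "(ai*ai)*(a*a) = ai*((ai*a)*a)" by (simp add: mult_assoc' dims)
    then show ?thesis by (simp add: inv dims)
  qed
  show ?thesis by (simp add: kron_mult' dims inv aa kron_one_one)
qed

lemma L1_lhs: "kron (kron (1\<^sub>m d) ai * \<Delta>) (1\<^sub>m d) * (kron (1\<^sub>m d) ai * \<Delta>)
   = kron (1\<^sub>m d) (kron ai (ai*ai)) * (kron \<Delta> a * \<Delta>)"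
proof -
  have 1: "kron (kron (1\<^sub>m d) ai * \<Delta>) (1\<^sub>m d) = kron (1\<^sub>m d) (kron ai (1\<^sub>m d)) * kron \<Delta> (1\<^sub>m d)"
    by (simp add: kron_mult' dims kron_assoc[symmetric])
  have 2: "kron \<Delta> (1\<^sub>m d) * kron (1\<^sub>m d) ai = kron (kron (1\<^sub>m d) (1\<^sub>m d)) (ai*ai) * kron \<Delta> a"
  proof -
    have "(ai*ai)*a = ai" by (simp add: mult_assoc' dims inv)
    then show ?thesis by (simp add: kron_mult' dims kron_one_one)
  qed
  have "kron (kron (1\<^sub>m d) ai * \<Delta>) (1\<^sub>m d) * (kron (1\<^sub>m d) ai * \<Delta>)
     = kron (1\<^sub>m d) (kron ai (1\<^sub>m d)) * ((kron \<Delta> (1\<^sub>m d) * kron (1\<^sub>m d) ai) * \<Delta>)"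
    unfolding 1 by (simp add: mult_assoc' dims)
  also have "\<dots> = kron (1\<^sub>m d) (kron ai (1\<^sub>m d)) * (kron (1\<^sub>m d) (kron (1\<^sub>m d) (ai*ai)) * (kron \<Delta> a * \<Delta>))"
    unfolding 2 by (simp add: mult_assoc' dims kron_assoc)
  also have "\<dots> = (kron (1\<^sub>m d) (kron ai (1\<^sub>m d)) * kron (1\<^sub>m d) (kron (1\<^sub>m d) (ai*ai))) * (kron \<Delta> a * \<Delta>)"
    by (rule mult_assoc'[symmetric]) (simp_all add: dims)
  also have "\<dots> = kron (1\<^sub>m d) (kron ai (ai*ai)) * (kron \<Delta> a * \<Delta>)"
    by (simp add: kron_mult' dims)
  finally show ?thesis .
qed

lemma L1_rhs: "kron a (kron (1\<^sub>m d) ai * \<Delta>) * (kron (1\<^sub>m d) ai * \<Delta>)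
   = kron (1\<^sub>m d) (kron ai (ai*ai)) * (kron a \<Delta> * \<Delta>)"
proof -
  have 1: "kron a (kron (1\<^sub>m d) ai * \<Delta>) = kron (1\<^sub>m d) (kron (1\<^sub>m d) ai) * kron a \<Delta>"
    by (simp add: kron_mult' dims)
  have 2: "kron a \<Delta> * kron (1\<^sub>m d) ai = kron (1\<^sub>m d) (kron ai ai) * kron a \<Delta>"
    by (simp add: kron_mult' dims F1)
  have "kron a (kron (1\<^sub>m d) ai * \<Delta>) * (kron (1\<^sub>m d) ai * \<Delta>)
     = kron (1\<^sub>m d) (kron (1\<^sub>m d) ai) * ((kron a \<Delta> * kron (1\<^sub>m d) ai) * \<Delta>)"
    unfolding 1 by (simp add: mult_assoc' dims)
  also have "\<dots> = kron (1\<^sub>m d) (kron (1\<^sub>m d) ai) * (kron (1\<^sub>m d) (kron ai ai) * (kron a \<Delta> * \<Delta>))"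
    unfolding 2 by (simp add: mult_assoc' dims)
  also have "\<dots> = (kron (1\<^sub>m d) (kron (1\<^sub>m d) ai) * kron (1\<^sub>m d) (kron ai ai)) * (kron a \<Delta> * \<Delta>)"
    by (rule mult_assoc'[symmetric]) (simp_all add: dims)
  also have "\<dots> = kron (1\<^sub>m d) (kron ai (ai*ai)) * (kron a \<Delta> * \<Delta>)"
    by (simp add: kron_mult' dims)
  finally show ?thesis .
qed

lemma L1: "(kron (kron (1\<^sub>m d) ai * \<Delta>) (1\<^sub>m d) * (kron (1\<^sub>m d) ai * \<Delta>) =
    kron a (kron (1\<^sub>m d) ai * \<Delta>) * (kron (1\<^sub>m d) ai * \<Delta>)) \<longleftrightarrow>
   (kron a \<Delta> * \<Delta> = kron \<Delta> a * \<Delta>)"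
  unfolding L1_lhs L1_rhs
proof
  assume h: "kron (1\<^sub>m d) (kron ai (ai*ai)) * (kron \<Delta> a * \<Delta>) = kron (1\<^sub>m d) (kron ai (ai*ai)) * (kron a \<Delta> * \<Delta>)"
  show "kron a \<Delta> * \<Delta> = kron \<Delta> a * \<Delta>"
    by (rule cancel_left[OF M_inv _ _ _ _ _ h[symmetric]]) (simp_all add: dims)
qed simp

lemma L2: "(kron \<epsilon> (1\<^sub>m d) * (kron (1\<^sub>m d) ai * \<Delta>) = 1\<^sub>m d) \<longleftrightarrow> (kron \<epsilon> (1\<^sub>m d) * \<Delta> = a)"
proof -
  have "kron \<epsilon> (1\<^sub>m d) * (kron (1\<^sub>m d) ai * \<Delta>) = (kron \<epsilon> (1\<^sub>m d) * kron (1\<^sub>m d) ai) * \<Delta>"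
    by (rule mult_assoc'[symmetric]) (simp_all add: dims)
  also have "\<dots> = kron \<epsilon> ai * \<Delta>" by (simp add: kron_mult' dims)
  also have "\<dots> = (kron (1\<^sub>m 1) ai * kron \<epsilon> (1\<^sub>m d)) * \<Delta>"
    by (subst kron_mult') (simp_all add: dims)
  also have "\<dots> = ai * (kron \<epsilon> (1\<^sub>m d) * \<Delta>)" by (simp add: mult_assoc' dims)
  finally have e: "kron \<epsilon> (1\<^sub>m d) * (kron (1\<^sub>m d) ai * \<Delta>) = ai * (kron \<epsilon> (1\<^sub>m d) * \<Delta>)" .
  show ?thesis unfolding e
  proof
    assume h: "ai * (kron \<epsilon> (1\<^sub>m d) * \<Delta>) = 1\<^sub>m d"
    have "kron \<epsilon> (1\<^sub>m d) * \<Delta> = (a * ai) * (kron \<epsilon> (1\<^sub>m d) * \<Delta>)" by (simp add: inv dims)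
    also have "\<dots> = a * (ai * (kron \<epsilon> (1\<^sub>m d) * \<Delta>))" by (rule mult_assoc') (simp_all add: dims)
    also have "\<dots> = a" by (simp add: h dims)
    finally show "kron \<epsilon> (1\<^sub>m d) * \<Delta> = a" .
  qed (simp add: inv)
qed

lemma L3: "(kron ai \<epsilon> * (kron (1\<^sub>m d) ai * \<Delta>) = 1\<^sub>m d) \<longleftrightarrow> (kron (1\<^sub>m d) \<epsilon> * \<Delta> = a)"
proof -
  have "kron ai \<epsilon> * (kron (1\<^sub>m d) ai * \<Delta>) = (kron ai \<epsilon> * kron (1\<^sub>m d) ai) * \<Delta>"
    by (rule mult_assoc'[symmetric]) (simp_all add: dims)
  also have "\<dots> = kron ai \<epsilon> * \<Delta>" by (simp add: kron_mult' dims eps_ai)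
  also have "\<dots> = (kron ai (1\<^sub>m 1) * kron (1\<^sub>m d) \<epsilon>) * \<Delta>"
    by (subst kron_mult') (simp_all add: dims)
  also have "\<dots> = ai * (kron (1\<^sub>m d) \<epsilon> * \<Delta>)" by (simp add: mult_assoc' dims)
  finally have e: "kron ai \<epsilon> * (kron (1\<^sub>m d) ai * \<Delta>) = ai * (kron (1\<^sub>m d) \<epsilon> * \<Delta>)" .
  show ?thesis unfolding e
  proof
    assume h: "ai * (kron (1\<^sub>m d) \<epsilon> * \<Delta>) = 1\<^sub>m d"
    have "kron (1\<^sub>m d) \<epsilon> * \<Delta> = (a * ai) * (kron (1\<^sub>m d) \<epsilon> * \<Delta>)" by (simp add: inv dims)
    also have "\<dots> = a * (ai * (kron (1\<^sub>m d) \<epsilon> * \<Delta>))" by (rule mult_assoc') (simp_all add: dims)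
    also have "\<dots> = a" by (simp add: h dims)
    finally show "kron (1\<^sub>m d) \<epsilon> * \<Delta> = a" .
  qed (simp add: inv)
qed


abbreviation "Dp \<equiv> kron (1\<^sub>m d) ai * \<Delta>"

lemma dDp: "dim_row Dp = d*d" "dim_col Dp = d" by (simp_all add: dims)

lemma XD_hom:
  assumes X: "hobj X"
  shows "hhom (kron X a) (kron (kron X a) a) (kron X Dp)"
proof -
  note x = hobj_dims[OF X]
  have "kron (kron X a) a * kron X Dp = kron (X*X) (kron a a * Dp)"
    by (simp add: kron_assoc kron_mult' dims x)
  also have "\<dots> = kron (X*X) (Dp * a)" by (simp only: K1)
  also have "\<dots> = kron X Dp * kron X a" by (simp add: kron_mult' dims x)
  finally have eq: "kron (kron X a) a * kron X Dp = kron X Dp * kron X a" .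
  show ?thesis unfolding hhom_def
    by (intro conjI carrier_matI eq) (simp_all add: dims x)
qed

lemma XE_hom:
  assumes X: "hobj X"
  shows "hhom (kron X a) X (kron (inv_of X) \<epsilon>)"
proof -
  note x = hobj_dims[OF X]
  have "X * kron (inv_of X) \<epsilon> = kron (1\<^sub>m (dim_row X)) \<epsilon>"
    by (simp add: mult_kron_left1 dims x)
  also have "\<dots> = kron (inv_of X) \<epsilon> * kron X a" by (simp add: kron_mult' dims x he)
  finally have eq: "X * kron (inv_of X) \<epsilon> = kron (inv_of X) \<epsilon> * kron X a" .
  show ?thesis unfolding hhom_def
    by (intro conjI carrier_matI eq) (simp_all add: dims x)
qed

lemma nat_D:
  assumes X: "hobj X" and Y: "hobj Y" and f: "hhom X Y f"
  shows "kron Y Dp * kron f (1\<^sub>m d) = kron (kron f (1\<^sub>m d)) (1\<^sub>m d) * kron X Dp"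
proof -
  note x = hobj_dims[OF X] and y = hobj_dims[OF Y]
  have fd: "dim_row f = dim_row Y" "dim_col f = dim_row X" and fe: "Y * f = f * X" using f by (auto simp: hhom_def)
  have "kron Y Dp * kron f (1\<^sub>m d) = kron (Y*f) Dp" by (simp add: kron_mult' dims x y fd)
  also have "\<dots> = kron (f*X) (1\<^sub>m (d*d) * Dp)" by (simp add: fe dims)
  also have "\<dots> = kron (kron f (1\<^sub>m d)) (1\<^sub>m d) * kron X Dp"
    by (simp add: kron_assoc kron_mult' kron_one_one dims x y fd)
  finally show ?thesis .
qed

lemma nat_E:
  assumes X: "hobj X" and Y: "hobj Y" and f: "hhom X Y f"
  shows "kron (inv_of Y) \<epsilon> * kron f (1\<^sub>m d) = f * kron (inv_of X) \<epsilon>"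
proof -
  note x = hobj_dims[OF X] and y = hobj_dims[OF Y]
  have fd: "dim_row f = dim_row Y" "dim_col f = dim_row X" and fe: "Y * f = f * X" using f by (auto simp: hhom_def)
  have "inv_of Y * f = inv_of Y * f * (X * inv_of X)" using x y fd by simp
  also have "\<dots> = inv_of Y * (Y * f) * inv_of X" by (simp add: fe mult_assoc' x y fd)
  also have "inv_of Y * (Y * f) = (inv_of Y * Y) * f" by (rule mult_assoc'[symmetric]) (simp_all add: x y fd)
  also have "\<dots> = f" using y fd by simp
  finally have e: "inv_of Y * f = f * inv_of X" .
  have "kron (inv_of Y) \<epsilon> * kron f (1\<^sub>m d) = kron (inv_of Y * f) \<epsilon>"
    by (simp add: kron_mult' dims x y fd)
  also have "\<dots> = f * kron (inv_of X) \<epsilon>" by (simp add: e mult_kron_left1 dims x y fd)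
  finally show ?thesis .
qed

lemma C1:
  assumes X: "hobj X"
  shows "kron (kron X Dp) (1\<^sub>m d) * kron X Dp = kron (X*X) (kron Dp (1\<^sub>m d) * Dp)"
    "kron (kron X a) Dp * kron X Dp = kron (X*X) (kron a Dp * Dp)"
  using hobj_dims[OF X] by (simp_all add: kron_assoc kron_mult' dims)

lemma C2:
  assumes X: "hobj X"
  shows "kron (kron (inv_of X) \<epsilon>) (1\<^sub>m d) * kron X Dp = kron (1\<^sub>m (dim_row X)) (kron \<epsilon> (1\<^sub>m d) * Dp)"
  using hobj_dims[OF X] by (simp add: kron_assoc kron_mult' dims)

lemma C3:
  assumes X: "hobj X" and A: "hobj a" and aid: "ai = inv_of a"
  shows "kron (inv_of (kron X a)) \<epsilon> * kron X Dp = kron (1\<^sub>m (dim_row X)) (kron ai \<epsilon> * Dp)"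
  using hobj_dims[OF X] by (simp add: hobj_kron[OF X A] aid[symmetric] kron_assoc kron_mult' dims)


lemma comod_a:
  assumes M: "hobj M" and rd: "dim_row \<rho> = dim_row M * d" "dim_col \<rho> = dim_row M"
  shows "(kron M \<Delta> * \<rho> = kron \<rho> a * \<rho>) \<longleftrightarrow> (kron \<rho> (1\<^sub>m d) * \<rho> = kron M Dp * \<rho>)"
proof -
  note m = hobj_dims[OF M]
  define Q where "Q = kron (1\<^sub>m (dim_row M)) (kron (1\<^sub>m d) a)"
  define P where "P = kron (1\<^sub>m (dim_row M)) (kron (1\<^sub>m d) ai)"
  have q: "kron \<rho> a = Q * kron \<rho> (1\<^sub>m d)"
    unfolding Q_def by (simp add: kron_assoc[symmetric] kron_one_one kron_mult' dims rd)
  have p: "kron M Dp = P * kron M \<Delta>"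
    unfolding P_def by (simp add: kron_mult' dims m)
  have e1: "kron \<rho> a * \<rho> = Q * (kron \<rho> (1\<^sub>m d) * \<rho>)"
    unfolding q by (rule mult_assoc') (simp_all add: Q_def dims rd)
  have e2: "kron M Dp * \<rho> = P * (kron M \<Delta> * \<rho>)"
    unfolding p by (rule mult_assoc') (simp_all add: P_def dims rd m)
  have QP: "Q * P = 1\<^sub>m (dim_row M * (d*d))" unfolding Q_def P_def
    by (simp add: kron_mult' dims inv kron_one_one)
  have PQ: "P * Q = 1\<^sub>m (dim_row M * (d*d))" unfolding Q_def P_def
    by (simp add: kron_mult' dims inv kron_one_one)
  show ?thesis unfolding e1 e2
    by (rule inv_swap[OF QP PQ]) (simp_all add: P_def Q_def dims rd m mult.assoc)
qed

lemma comod_b: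
  assumes M: "hobj M" and rd: "dim_row \<rho> = dim_row M * d" "dim_col \<rho> = dim_row M"
  shows "(kron (1\<^sub>m (dim_row M)) \<epsilon> * \<rho> = M) \<longleftrightarrow> (kron (inv_of M) \<epsilon> * \<rho> = 1\<^sub>m (dim_row M))"
proof -
  note m = hobj_dims[OF M]
  have "kron (inv_of M) \<epsilon> = inv_of M * kron (1\<^sub>m (dim_row M)) \<epsilon>"
    by (simp add: mult_kron_left1 dims m)
  then have e: "kron (inv_of M) \<epsilon> * \<rho> = inv_of M * (kron (1\<^sub>m (dim_row M)) \<epsilon> * \<rho>)"
    by (simp add: mult_assoc' dims m rd)
  have "(kron (1\<^sub>m (dim_row M)) \<epsilon> * \<rho> = M * 1\<^sub>m (dim_row M)) \<longleftrightarrow>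
        (1\<^sub>m (dim_row M) = inv_of M * (kron (1\<^sub>m (dim_row M)) \<epsilon> * \<rho>))"
    by (rule inv_swap[OF m(4) m(5)]) (simp_all add: dims m rd)
  then show ?thesis unfolding e using m by auto
qed
end


lemma Fm_hom:
  fixes a X Y f :: "'a::field mat"
  assumes X: "hobj X" and Y: "hobj Y" and f: "hhom X Y f" and a: "dim_col a = dim_row a"
  shows "hhom (kron X a) (kron Y a) (kron f (1\<^sub>m (dim_row a)))"
proof -
  note x = hobj_dims[OF X] and y = hobj_dims[OF Y]
  have fd: "dim_row f = dim_row Y" "dim_col f = dim_row X" and fe: "Y * f = f * X" using f by (auto simp: hhom_def)
  have eq: "kron Y a * kron f (1\<^sub>m (dim_row a)) = kron f (1\<^sub>m (dim_row a)) * kron X a"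
    by (simp add: kron_mult' x y fd fe a)
  show ?thesis unfolding hhom_def
    by (intro conjI carrier_matI eq) (simp_all add: x y fd)
qed

theorem lemma4p1:
  fixes \<alpha>H \<Delta> \<epsilon> :: "'k::field_char_0 mat"
  assumes H: "hobj \<alpha>H"
    and Delta: "hhom \<alpha>H (kron \<alpha>H \<alpha>H) \<Delta>"
    and eps: "hhom \<alpha>H (1\<^sub>m 1) \<epsilon>"
  shows "(is_comonad (Hdd_obj \<alpha>H) (Hdd_mor \<alpha>H) (Hdd_delta \<alpha>H \<Delta>) (Hdd_eps \<alpha>H \<epsilon>)
           \<longleftrightarrow> hom_coalgebra \<alpha>H \<Delta> \<epsilon>) \<and>
         (hom_coalgebra \<alpha>H \<Delta> \<epsilon> \<longrightarrow>
           (\<forall>\<alpha>M \<rho>. hom_comodule \<alpha>H \<Delta> \<epsilon> \<alpha>M \<rho> \<longleftrightarrow>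
              comonad_comodule (Hdd_obj \<alpha>H) (Hdd_mor \<alpha>H) (Hdd_delta \<alpha>H \<Delta>) (Hdd_eps \<alpha>H \<epsilon>) \<alpha>M \<rho>)
         \<and> (\<forall>\<alpha>M \<rho> \<alpha>N \<sigma> f. hom_comodule \<alpha>H \<Delta> \<epsilon> \<alpha>M \<rho> \<and> hom_comodule \<alpha>H \<Delta> \<epsilon> \<alpha>N \<sigma> \<longrightarrow>
              (hom_comodule_hom \<alpha>H \<alpha>M \<rho> \<alpha>N \<sigma> f \<longleftrightarrow>
               comonad_comodule_hom (Hdd_obj \<alpha>H) (Hdd_mor \<alpha>H) \<alpha>M \<rho> \<alpha>N \<sigma> f)))"
proof -
  define d where "d = dim_row \<alpha>H"
  note A = hobj_dims[OF H]
  have da1: "dim_row \<alpha>H = d" and da2: "dim_col \<alpha>H = d" using A by (simp_all add: d_def)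
  have dai1: "dim_row (inv_of \<alpha>H) = d" and dai2: "dim_col (inv_of \<alpha>H) = d" using A by (simp_all add: d_def)
  have inv1: "\<alpha>H * inv_of \<alpha>H = 1\<^sub>m d" and inv2: "inv_of \<alpha>H * \<alpha>H = 1\<^sub>m d" using A by (simp_all add: d_def)
  have dD1: "dim_row \<Delta> = d*d" and dD2: "dim_col \<Delta> = d" and hD: "kron \<alpha>H \<alpha>H * \<Delta> = \<Delta> * \<alpha>H"
    using Delta by (auto simp: hhom_def d_def)
  have de1: "dim_row \<epsilon> = 1" and de2: "dim_col \<epsilon> = d" and he0: "1\<^sub>m 1 * \<epsilon> = \<epsilon> * \<alpha>H"
    using eps by (auto simp: hhom_def d_def)
  have he: "\<epsilon> * \<alpha>H = \<epsilon>" using he0 de1 by simp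
  note ctx = da1 da2 dai1 dai2 inv1 inv2 dD1 dD2 hD de1 de2 he
  have Hd: "dim_row \<alpha>H = d" by (simp add: d_def)
  define Dp where "Dp = kron (1\<^sub>m d) (inv_of \<alpha>H) * \<Delta>"
  have defs: "\<And>X. Hdd_obj \<alpha>H X = kron X \<alpha>H" "\<And>X Y f. Hdd_mor \<alpha>H X Y f = kron f (1\<^sub>m d)"
     "\<And>X. Hdd_delta \<alpha>H \<Delta> X = kron X Dp" "\<And>X. Hdd_eps \<alpha>H \<epsilon> X = kron (inv_of X) \<epsilon>"
    by (simp_all add: Hdd_obj_def Hdd_mor_def Hdd_delta_def Hdd_eps_def Dp_def d_def)
  have coalg: "hom_coalgebra \<alpha>H \<Delta> \<epsilon> \<longleftrightarrow>
     (kron \<alpha>H \<Delta> * \<Delta> = kron \<Delta> \<alpha>H * \<Delta> \<and> kron \<epsilon> (1\<^sub>m d) * \<Delta> = \<alpha>H \<and> kron (1\<^sub>m d) \<epsilon> * \<Delta> = \<alpha>H)"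
    unfolding hom_coalgebra_def using he by (simp add: d_def)
  have L1': "(kron Dp (1\<^sub>m d) * Dp = kron \<alpha>H Dp * Dp) \<longleftrightarrow> (kron \<alpha>H \<Delta> * \<Delta> = kron \<Delta> \<alpha>H * \<Delta>)"
    unfolding Dp_def by (rule L1[OF ctx])
  have L2': "(kron \<epsilon> (1\<^sub>m d) * Dp = 1\<^sub>m d) \<longleftrightarrow> (kron \<epsilon> (1\<^sub>m d) * \<Delta> = \<alpha>H)"
    unfolding Dp_def by (rule L2[OF ctx])
  have L3': "(kron (inv_of \<alpha>H) \<epsilon> * Dp = 1\<^sub>m d) \<longleftrightarrow> (kron (1\<^sub>m d) \<epsilon> * \<Delta> = \<alpha>H)"
    unfolding Dp_def by (rule L3[OF ctx])
  have part1: "is_comonad (Hdd_obj \<alpha>H) (Hdd_mor \<alpha>H) (Hdd_delta \<alpha>H \<Delta>) (Hdd_eps \<alpha>H \<epsilon>) \<longleftrightarrow> hom_coalgebra \<alpha>H \<Delta> \<epsilon>"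
  proof
    assume cm: "is_comonad (Hdd_obj \<alpha>H) (Hdd_mor \<alpha>H) (Hdd_delta \<alpha>H \<Delta>) (Hdd_eps \<alpha>H \<epsilon>)"
    have laws: "kron (kron (1\<^sub>m 1) Dp) (1\<^sub>m d) * kron (1\<^sub>m 1) Dp = kron (kron (1\<^sub>m 1) \<alpha>H) Dp * kron (1\<^sub>m 1) Dp"
       "kron (kron (inv_of (1\<^sub>m 1)) \<epsilon>) (1\<^sub>m d) * kron (1\<^sub>m 1) Dp = 1\<^sub>m (dim_row (kron (1\<^sub>m 1) \<alpha>H))"
       "kron (inv_of (kron (1\<^sub>m 1) \<alpha>H)) \<epsilon> * kron (1\<^sub>m 1) Dp = 1\<^sub>m (dim_row (kron (1\<^sub>m 1) \<alpha>H))"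
    proof -
      have c7: "\<forall>X. hobj X \<longrightarrow> Hdd_mor \<alpha>H (Hdd_obj \<alpha>H X) (Hdd_obj \<alpha>H (Hdd_obj \<alpha>H X)) (Hdd_delta \<alpha>H \<Delta> X) * Hdd_delta \<alpha>H \<Delta> X =
         Hdd_delta \<alpha>H \<Delta> (Hdd_obj \<alpha>H X) * Hdd_delta \<alpha>H \<Delta> X \<and>
         Hdd_mor \<alpha>H (Hdd_obj \<alpha>H X) X (Hdd_eps \<alpha>H \<epsilon> X) * Hdd_delta \<alpha>H \<Delta> X = 1\<^sub>m (dim_row (Hdd_obj \<alpha>H X)) \<and>
         Hdd_eps \<alpha>H \<epsilon> (Hdd_obj \<alpha>H X) * Hdd_delta \<alpha>H \<Delta> X = 1\<^sub>m (dim_row (Hdd_obj \<alpha>H X))"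
        using cm unfolding is_comonad_def by (elim conjE) assumption
      note c = c7[rule_format, OF hobj_one(1)[of 1], unfolded defs]
      show "kron (kron (1\<^sub>m 1) Dp) (1\<^sub>m d) * kron (1\<^sub>m 1) Dp = kron (kron (1\<^sub>m 1) \<alpha>H) Dp * kron (1\<^sub>m 1) Dp"
        using c by (elim conjE)
      show "kron (kron (inv_of (1\<^sub>m 1)) \<epsilon>) (1\<^sub>m d) * kron (1\<^sub>m 1) Dp = 1\<^sub>m (dim_row (kron (1\<^sub>m 1) \<alpha>H))"
        using c by (elim conjE)
      show "kron (inv_of (kron (1\<^sub>m 1) \<alpha>H)) \<epsilon> * kron (1\<^sub>m 1) Dp = 1\<^sub>m (dim_row (kron (1\<^sub>m 1) \<alpha>H))"
        using c by (elim conjE)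
    qed
    have l1: "kron Dp (1\<^sub>m d) * Dp = kron \<alpha>H Dp * Dp" using laws(1) by simp
    have l2: "kron \<epsilon> (1\<^sub>m d) * Dp = 1\<^sub>m d" using laws(2) by (simp add: Hd hobj_one(2))
    have l3: "kron (inv_of \<alpha>H) \<epsilon> * Dp = 1\<^sub>m d" using laws(3) by (simp add: Hd)
    show "hom_coalgebra \<alpha>H \<Delta> \<epsilon>" unfolding coalg using l1 l2 l3 L1' L2' L3' by blast
  next
    assume hc: "hom_coalgebra \<alpha>H \<Delta> \<epsilon>"
    have l1: "kron Dp (1\<^sub>m d) * Dp = kron \<alpha>H Dp * Dp"
     and l2: "kron \<epsilon> (1\<^sub>m d) * Dp = 1\<^sub>m d"
     and l3: "kron (inv_of \<alpha>H) \<epsilon> * Dp = 1\<^sub>m d" using hc unfolding coalg L1' L2' L3' by blast+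
    show "is_comonad (Hdd_obj \<alpha>H) (Hdd_mor \<alpha>H) (Hdd_delta \<alpha>H \<Delta>) (Hdd_eps \<alpha>H \<epsilon>)"
      unfolding is_comonad_def defs
    proof (intro conjI allI impI; (elim conjE)?)
      fix X :: "'k mat" assume X: "hobj X"
      show "hobj (kron X \<alpha>H)" by (rule hobj_kron(1)[OF X H])
    next
      fix X Y f :: "'k mat" assume X: "hobj X" and Y: "hobj Y" and f: "hhom X Y f"
      show "hhom (kron X \<alpha>H) (kron Y \<alpha>H) (kron f (1\<^sub>m d))"
        using Fm_hom[OF X Y f A(1)] by (simp add: Hd)
    next
      fix X :: "'k mat" assume X: "hobj X"
      show "kron (1\<^sub>m (dim_row X)) (1\<^sub>m d) = 1\<^sub>m (dim_row (kron X \<alpha>H))"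
        by (simp add: kron_one_one Hd)
    next
      fix X Y Z f g :: "'k mat" assume X: "hobj X" and Y: "hobj Y" and Z: "hobj Z" and f: "hhom X Y f" and g: "hhom Y Z g"
      have fc: "f \<in> carrier_mat (dim_row Y) (dim_row X)" and gc: "g \<in> carrier_mat (dim_row Z) (dim_row Y)"
        using f g unfolding hhom_def by blast+
      have "dim_col g = dim_row f" using carrier_matD[OF fc] carrier_matD[OF gc] by simp
      then show "kron (g * f) (1\<^sub>m d) = kron g (1\<^sub>m d) * kron f (1\<^sub>m d)"
        by (simp add: kron_mult')
    next
      fix X :: "'k mat" assume X: "hobj X"
      show "hhom (kron X \<alpha>H) (kron (kron X \<alpha>H) \<alpha>H) (kron X Dp)"
        unfolding Dp_def by (rule XD_hom[OF ctx X])
    next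
      fix X :: "'k mat" assume X: "hobj X"
      show "hhom (kron X \<alpha>H) X (kron (inv_of X) \<epsilon>)"
        by (rule XE_hom[OF ctx X])
    next
      fix X Y f :: "'k mat" assume X: "hobj X" and Y: "hobj Y" and f: "hhom X Y f"
      show "kron Y Dp * kron f (1\<^sub>m d) = kron (kron f (1\<^sub>m d)) (1\<^sub>m d) * kron X Dp"
        unfolding Dp_def by (rule nat_D[OF ctx X Y f])
    next
      fix X Y f :: "'k mat" assume X: "hobj X" and Y: "hobj Y" and f: "hhom X Y f"
      show "kron (inv_of Y) \<epsilon> * kron f (1\<^sub>m d) = f * kron (inv_of X) \<epsilon>"
        by (rule nat_E[OF ctx X Y f])
    next
      fix X :: "'k mat" assume X: "hobj X"
      show "kron (kron X Dp) (1\<^sub>m d) * kron X Dp = kron (kron X \<alpha>H) Dp * kron X Dp"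
        unfolding Dp_def C1[OF ctx X] using l1 by (simp add: Dp_def)
    next
      fix X :: "'k mat" assume X: "hobj X"
      show "kron (kron (inv_of X) \<epsilon>) (1\<^sub>m d) * kron X Dp = 1\<^sub>m (dim_row (kron X \<alpha>H))"
        unfolding Dp_def C2[OF ctx X] using l2 by (simp add: Dp_def kron_one_one Hd)
    next
      fix X :: "'k mat" assume X: "hobj X"
      show "kron (inv_of (kron X \<alpha>H)) \<epsilon> * kron X Dp = 1\<^sub>m (dim_row (kron X \<alpha>H))"
        unfolding Dp_def C3[OF ctx X H refl] using l3 by (simp add: Dp_def kron_one_one Hd)
    qed
  qed
  have part2: "\<forall>\<alpha>M \<rho>. hom_comodule \<alpha>H \<Delta> \<epsilon> \<alpha>M \<rho> \<longleftrightarrow>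
              comonad_comodule (Hdd_obj \<alpha>H) (Hdd_mor \<alpha>H) (Hdd_delta \<alpha>H \<Delta>) (Hdd_eps \<alpha>H \<epsilon>) \<alpha>M \<rho>"
  proof (intro allI)
    fix M \<rho> :: "'k mat"
    show "hom_comodule \<alpha>H \<Delta> \<epsilon> M \<rho> \<longleftrightarrow>
              comonad_comodule (Hdd_obj \<alpha>H) (Hdd_mor \<alpha>H) (Hdd_delta \<alpha>H \<Delta>) (Hdd_eps \<alpha>H \<epsilon>) M \<rho>"
    proof (cases "hobj M \<and> hhom M (kron M \<alpha>H) \<rho>")
      case True
      then have M: "hobj M" and rd: "dim_row \<rho> = dim_row M * d" "dim_col \<rho> = dim_row M"
        by (auto simp: hhom_def Hd)
      have a: "(kron M \<Delta> * \<rho> = kron \<rho> \<alpha>H * \<rho>) \<longleftrightarrow> (kron \<rho> (1\<^sub>m d) * \<rho> = kron M Dp * \<rho>)"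
        unfolding Dp_def by (rule comod_a[OF ctx M rd])
      have b: "(kron (1\<^sub>m (dim_row M)) \<epsilon> * \<rho> = M) \<longleftrightarrow> (kron (inv_of M) \<epsilon> * \<rho> = 1\<^sub>m (dim_row M))"
        by (rule comod_b[OF ctx M rd])
      show ?thesis unfolding hom_comodule_def comonad_comodule_def defs using True a b by blast
    next
      case False
      then show ?thesis unfolding hom_comodule_def comonad_comodule_def defs by blast
    qed
  qed
  have part3: "\<forall>\<alpha>M \<rho> \<alpha>N \<sigma> f. hom_comodule \<alpha>H \<Delta> \<epsilon> \<alpha>M \<rho> \<and> hom_comodule \<alpha>H \<Delta> \<epsilon> \<alpha>N \<sigma> \<longrightarrow>
              (hom_comodule_hom \<alpha>H \<alpha>M \<rho> \<alpha>N \<sigma> f \<longleftrightarrow>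
               comonad_comodule_hom (Hdd_obj \<alpha>H) (Hdd_mor \<alpha>H) \<alpha>M \<rho> \<alpha>N \<sigma> f)"
    by (simp add: hom_comodule_hom_def comonad_comodule_hom_def Hdd_mor_def)
  show ?thesis using part1 part2 part3 by blast
qed

end
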